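(* Let $n\ge2$, $T\ge2$, $G=([T],\mathcal{E})$ a connected undirected graph with incidence matrix $D$ (any orientation) and $M=D\otimes I_n$. For each $t\in[T]$ let $G_t=([n],\mathcal{E}_t)$ be an undirected graph and $C_t\in\{-1,1,0\}^{|\mathcal{E}_t|\times n}$ the incidence matrix of some orientation of its edges; let $C=\mathrm{blockdiag}(C_1,\dots,C_T)$ and $O_T=[C_1^\top\ \cdots\ C_T^\top]^\top$. Let $P=I_T\otimes(I_n-\frac1n\mathbf{1}_n\mathbf{1}_n^\top)$. If $\mu>0$ and $\mathrm{rank}(O_T)=n-1$, then $\mathrm{null}(\mu M^\top M+C^\top C)=\mathrm{span}(\mathbf{1}_{nT})$. Consequently, the column space of $P$ is contained in the column space of $\mu M^\top M+C^\top C$.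
   Context: $\mathbf{1}_k$ denotes the all-ones vector in $\mathbb{R}^k$; $\otimes$ is the Kronecker product. *)

theory Defs
  imports "Jordan_Normal_Form.DL_Rank" "Jordan_Normal_Form.Matrix_Kernel"
begin

text \<open>An undirected simple graph on vertex set [N] = {0..<N} with a chosen orientation:
  a list of oriented edges (a,b), a \<noteq> b, no undirected edge repeated.\<close>
definition oriented_simple_graph :: "nat \<Rightarrow> (nat \<times> nat) list \<Rightarrow> bool" where
  "oriented_simple_graph N Es \<longleftrightarrow>
     (\<forall>(a,b) \<in> set Es. a < N \<and> b < N \<and> a \<noteq> b) \<and>
     distinct (map (\<lambda>(a,b). {a,b}) Es)"

definition undirected_adj :: "(nat \<times> nat) list \<Rightarrow> (nat \<times> nat) set" where
  "undirected_adj Es = set Es \<union> (set Es)\<inverse>"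

definition graph_connected :: "nat \<Rightarrow> (nat \<times> nat) list \<Rightarrow> bool" where
  "graph_connected N Es \<longleftrightarrow> (\<forall>u<N. \<forall>v<N. (u,v) \<in> (undirected_adj Es)\<^sup>*)"

definition incidence_mat :: "nat \<Rightarrow> (nat \<times> nat) list \<Rightarrow> real mat" where
  "incidence_mat N Es = mat (length Es) N (\<lambda>(e,v).
      if v = fst (Es ! e) then 1 else if v = snd (Es ! e) then -1 else 0)"

definition kron :: "'a::semiring_0 mat \<Rightarrow> 'a mat \<Rightarrow> 'a mat" where
  "kron A B = mat (dim_row A * dim_row B) (dim_col A * dim_col B)
     (\<lambda>(i,j). A $$ (i div dim_row B, j div dim_col B) * B $$ (i mod dim_row B, j mod dim_col B))"

definition stack_rows :: "nat \<Rightarrow> real mat list \<Rightarrow> real mat" where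
  "stack_rows nc As = foldr (\<lambda>A B. A @\<^sub>r B) As (0\<^sub>m 0 nc)"

definition ones_vec :: "nat \<Rightarrow> real vec" where
  "ones_vec k = vec k (\<lambda>_. 1)"

definition ones_mat :: "nat \<Rightarrow> real mat" where
  "ones_mat k = mat k k (\<lambda>_. 1)"

definition col_space :: "real mat \<Rightarrow> real vec set" where
  "col_space A = {A *\<^sub>v x | x. x \<in> carrier_vec (dim_col A)}"

definition span_one :: "real vec \<Rightarrow> real vec set" where
  "span_one v = {c \<cdot>\<^sub>v v | c. True}"

end

theory Submission
  imports Defs
begin


lemma sum_pm:
  fixes f :: "nat \<Rightarrow> real"
  assumes "p < N" "q < N" "p \<noteq> q"
  shows "(\<Sum>j\<in>{0..<N}. (if j = p then 1 else if j = q then -1 else 0) * f j) = f p - f q"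
proof -
  have "(\<Sum>j\<in>{0..<N}. (if j = p then 1 else if j = q then -1 else 0) * f j)
      = (\<Sum>j\<in>{0..<N}. (if j = p then f j else 0) + (if j = q then - f j else 0))"
    by (rule sum.cong) (use assms in auto)
  also have "\<dots> = f p - f q" using assms by (simp add: sum.distrib)
  finally show ?thesis .
qed

lemma inc_row:
  assumes G: "oriented_simple_graph N Es" and e: "e < length Es" and x: "x \<in> carrier_vec N"
  shows "(incidence_mat N Es *\<^sub>v x) $ e = x $ fst (Es ! e) - x $ snd (Es ! e)"
proof -
  obtain a b where ab: "Es ! e = (a,b)" by fastforce
  have "(a,b) \<in> set Es" using e ab nth_mem by metis
  hence abN: "a < N" "b < N" "a \<noteq> b" using G unfolding oriented_simple_graph_def by auto
  have "(incidence_mat N Es *\<^sub>v x) $ e = (\<Sum>j\<in>{0..<N}. (if j = a then 1 else if j = b then -1 else 0) * x $ j)"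
    using e x ab unfolding incidence_mat_def by (auto simp: mult_mat_vec_def scalar_prod_def intro!: sum.cong)
  also have "\<dots> = x $ a - x $ b" by (rule sum_pm[OF abN])
  finally show ?thesis using ab by simp
qed

lemma inc_carrier: "incidence_mat N Es \<in> carrier_mat (length Es) N"
  unfolding incidence_mat_def by auto

lemma inc_ones:
  assumes G: "oriented_simple_graph N Es"
  shows "incidence_mat N Es *\<^sub>v ones_vec N = 0\<^sub>v (length Es)"
proof (rule eq_vecI)
  fix e assume "e < dim_vec (0\<^sub>v (length Es) :: real vec)"
  hence e: "e < length Es" by simp
  obtain a b where ab: "Es ! e = (a,b)" by fastforce
  have "(a,b) \<in> set Es" using e ab nth_mem by metis
  hence abN: "a < N" "b < N" using G unfolding oriented_simple_graph_def by auto
  show "(incidence_mat N Es *\<^sub>v ones_vec N) $ e = 0\<^sub>v (length Es) $ e"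
    using inc_row[OF G e, of "ones_vec N"] ab abN e by (simp add: ones_vec_def)
qed (simp add: incidence_mat_def)

lemma kron_row:
  assumes G: "oriented_simple_graph T Es" and n: "n > 0" and x: "x \<in> carrier_vec (T*n)"
    and i: "i < length Es * n"
  shows "(kron (incidence_mat T Es) (1\<^sub>m n) *\<^sub>v x) $ i
       = x $ (fst (Es ! (i div n)) * n + i mod n) - x $ (snd (Es ! (i div n)) * n + i mod n)"
proof -
  define e where "e = i div n"
  define k where "k = i mod n"
  have e: "e < length Es" using i n unfolding e_def by (simp add: less_mult_imp_div_less)
  have k: "k < n" using n unfolding k_def by simp
  obtain a b where ab: "Es ! e = (a,b)" by fastforce
  have "(a,b) \<in> set Es" using e ab nth_mem by metis
  hence abN: "a < T" "b < T" "a \<noteq> b" using G unfolding oriented_simple_graph_def by auto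
  have lt: "c*n+k < T*n" if "c < T" for c
  proof -
    have "c*n+k < (c+1)*n" using k by simp
    also have "\<dots> \<le> T*n" using that by (intro mult_le_mono1) simp
    finally show ?thesis .
  qed
  have pq: "a*n+k < T*n" "b*n+k < T*n" "a*n+k \<noteq> b*n+k"
    using lt abN n by auto
  have ent: "kron (incidence_mat T Es) (1\<^sub>m n) $$ (i, j) =
        (if j = a*n+k then 1 else if j = b*n+k then -1 else 0)" if j: "j < T*n" for j
  proof -
    have jd: "j div n < T" using j n by (simp add: less_mult_imp_div_less)
    have jmod: "j mod n < n" using n by simp
    have "kron (incidence_mat T Es) (1\<^sub>m n) $$ (i, j) =
      incidence_mat T Es $$ (e, j div n) * 1\<^sub>m n $$ (k, j mod n)"
      unfolding kron_def e_def k_def using i j inc_carrier[of T Es] by auto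
    also have "\<dots> = (if j div n = a then 1 else if j div n = b then -1 else 0) * (if k = j mod n then 1 else 0)"
      using e jd jmod k ab unfolding incidence_mat_def by auto
    also have "\<dots> = (if j = a*n+k then 1 else if j = b*n+k then -1 else 0)"
    proof (cases "k = j mod n")
      case True
      have key: "(j = c*n+k) \<longleftrightarrow> (j div n = c)" for c
      proof
        assume "j = c*n+k" then show "j div n = c" using k by simp
      next
        assume "j div n = c" then show "j = c*n+k" using True by (metis div_mult_mod_eq)
      qed
      show ?thesis unfolding key[of a] key[of b] using True abN by simp
    next
      case False
      have "j \<noteq> a*n+k" "j \<noteq> b*n+k" using False k by auto
      then show ?thesis using False by simp
    qed
    finally show ?thesis .
  qed
  have "(kron (incidence_mat T Es) (1\<^sub>m n) *\<^sub>v x) $ i =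
     (\<Sum>j\<in>{0..<T*n}. (if j = a*n+k then 1 else if j = b*n+k then -1 else 0) * x $ j)"
    using i x inc_carrier[of T Es] ent unfolding mult_mat_vec_def scalar_prod_def
    by (auto simp: kron_def intro!: sum.cong)
  also have "\<dots> = x $ (a*n+k) - x $ (b*n+k)" by (rule sum_pm[OF pq])
  finally show ?thesis using ab unfolding e_def k_def by simp
qed



lemma stack_Cons: "stack_rows n (A # As) = A @\<^sub>r stack_rows n As"
  unfolding stack_rows_def by simp

lemma stack_carrier: "(\<forall>A\<in>set As. dim_col A = n) \<Longrightarrow> stack_rows n As \<in> carrier_mat (sum_list (map dim_row As)) n"
proof (induction As)
  case Nil then show ?case by (simp add: stack_rows_def)
next
  case (Cons A As)
  have A: "A \<in> carrier_mat (dim_row A) n" by (rule carrier_matI) (use Cons.prems in auto)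
  have S: "stack_rows n As \<in> carrier_mat (sum_list (map dim_row As)) n" using Cons.IH Cons.prems by simp
  have e: "sum_list (map dim_row (A#As)) = dim_row A + sum_list (map dim_row As)" by simp
  show ?case unfolding stack_Cons e by (rule carrier_append_rows[OF A S])
qed

lemma append_zero_vec: "v @\<^sub>v (0\<^sub>v 0 :: 'a :: zero vec) = v"
  by (intro eq_vecI) auto

lemma zero_mult_vec: "(v :: 'a :: comm_ring_1 vec) \<in> carrier_vec nc \<Longrightarrow> 0\<^sub>m nr nc *\<^sub>v v = 0\<^sub>v nr"
  by (intro eq_vecI) auto

lemma stack_mult:
  assumes "\<forall>A\<in>set (A # As). dim_col A = n" and y: "y \<in> carrier_vec n"
  shows "stack_rows n (A#As) *\<^sub>v y = (A *\<^sub>v y) @\<^sub>v (stack_rows n As *\<^sub>v y)"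
proof -
  have A: "A \<in> carrier_mat (dim_row A) n" by (rule carrier_matI) (use assms in auto)
  have S: "stack_rows n As \<in> carrier_mat (sum_list (map dim_row As)) n"
    using assms by (intro stack_carrier) auto
  have "stack_rows n (A#As) *\<^sub>v y = four_block_mat A (0\<^sub>m (dim_row A) 0) (stack_rows n As) (0\<^sub>m (sum_list (map dim_row As)) 0) *\<^sub>v (y @\<^sub>v 0\<^sub>v 0)"
    unfolding stack_Cons append_rows_def append_zero_vec carrier_matD(1)[OF S] ..
  also have "\<dots> = (A *\<^sub>v y + 0\<^sub>m (dim_row A) 0 *\<^sub>v 0\<^sub>v 0) @\<^sub>v (stack_rows n As *\<^sub>v y + 0\<^sub>m (sum_list (map dim_row As)) 0 *\<^sub>v 0\<^sub>v 0)"
    by (rule four_block_mat_mult_vec[OF A zero_carrier_mat S zero_carrier_mat y zero_carrier_vec])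
  also have "\<dots> = (A *\<^sub>v y) @\<^sub>v (stack_rows n As *\<^sub>v y)"
    using mult_mat_vec_carrier[OF A y] mult_mat_vec_carrier[OF S y]
    by (simp only: zero_mult_vec[OF zero_carrier_vec] right_zero_vec)
  finally show ?thesis .
qed

lemma sum_list_const_n: "\<forall>A\<in>set As. dim_col A = n \<Longrightarrow> sum_list (map dim_col As) = length As * n"
  by (induction As) auto

lemma rep_Cons:
  assumes y: "y \<in> carrier_vec n"
  shows "vec (Suc k * n) (\<lambda>i. y $ (i mod n)) = y @\<^sub>v vec (k * n) (\<lambda>i. y $ (i mod n))"
proof (rule eq_vecI)
  fix i assume "i < dim_vec (y @\<^sub>v vec (k * n) (\<lambda>i. y $ (i mod n)))"
  hence i: "i < n + k * n" using y by simp
  show "vec (Suc k * n) (\<lambda>i. y $ (i mod n)) $ i = (y @\<^sub>v vec (k * n) (\<lambda>i. y $ (i mod n))) $ i"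
  proof (cases "i < n")
    case True then show ?thesis using i y by simp
  next
    case False
    hence eq: "(i - n) mod n = i mod n" by (simp add: le_mod_geq)
    have l: "vec (Suc k * n) (\<lambda>i. y $ (i mod n)) $ i = y $ (i mod n)" using i by simp
    have r: "(y @\<^sub>v vec (k * n) (\<lambda>i. y $ (i mod n))) $ i = y $ ((i - n) mod n)" using i y False by simp
    show ?thesis unfolding l r eq ..
  qed
qed (use y in simp)

lemma diag_rep:
  assumes "\<forall>A\<in>set As. dim_col A = n" and y: "y \<in> carrier_vec n"
  shows "diag_block_mat As *\<^sub>v vec (length As * n) (\<lambda>i. y $ (i mod n)) = stack_rows n As *\<^sub>v y"
  using assms(1)
proof (induction As)
  case Nil
  show ?case unfolding stack_rows_def mult_mat_vec_def by (rule eq_vecI) auto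
next
  case (Cons A As)
  let ?r = "vec (length As * n) (\<lambda>i. y $ (i mod n))"
  let ?B = "diag_block_mat As"
  have prem: "\<forall>A\<in>set As. dim_col A = n" using Cons.prems by auto
  have A: "A \<in> carrier_mat (dim_row A) n" by (rule carrier_matI) (use Cons.prems in auto)
  have B: "?B \<in> carrier_mat (sum_list (map dim_row As)) (length As * n)"
    apply (rule carrier_matI)
     apply (rule dim_diag_block_mat(1))
    apply (subst dim_diag_block_mat(2))
    by (rule sum_list_const_n[OF prem])
  have r: "?r \<in> carrier_vec (length As * n)" by (rule vec_carrier)
  have d: "diag_block_mat (A#As) = four_block_mat A (0\<^sub>m (dim_row A) (length As * n)) (0\<^sub>m (sum_list (map dim_row As)) n) ?B"
    unfolding diag_block_mat.simps Let_def carrier_matD[OF B] carrier_matD(2)[OF A] ..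
  have v: "vec (length (A#As) * n) (\<lambda>i. y $ (i mod n)) = y @\<^sub>v ?r"
    unfolding length_Cons by (rule rep_Cons[OF y])
  have "diag_block_mat (A # As) *\<^sub>v vec (length (A # As) * n) (\<lambda>i. y $ (i mod n))
     = four_block_mat A (0\<^sub>m (dim_row A) (length As * n)) (0\<^sub>m (sum_list (map dim_row As)) n) ?B *\<^sub>v (y @\<^sub>v ?r)"
    unfolding d v ..
  also have "\<dots> = (A *\<^sub>v y + 0\<^sub>m (dim_row A) (length As * n) *\<^sub>v ?r) @\<^sub>v (0\<^sub>m (sum_list (map dim_row As)) n *\<^sub>v y + ?B *\<^sub>v ?r)"
    by (rule four_block_mat_mult_vec[OF A zero_carrier_mat zero_carrier_mat B y r])
  also have "\<dots> = (A *\<^sub>v y) @\<^sub>v (?B *\<^sub>v ?r)"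
    using mult_mat_vec_carrier[OF A y] mult_mat_vec_carrier[OF B r]
    by (simp only: zero_mult_vec[OF r] zero_mult_vec[OF y] right_zero_vec left_zero_vec)
  also have "\<dots> = (A *\<^sub>v y) @\<^sub>v (stack_rows n As *\<^sub>v y)" unfolding Cons.IH[OF prem] ..
  also have "\<dots> = stack_rows n (A # As) *\<^sub>v y" by (rule stack_mult[OF Cons.prems y, symmetric])
  finally show ?case .
qed

lemma stack_zero:
  assumes "\<forall>A\<in>set As. dim_col A = n \<and> A *\<^sub>v y = 0\<^sub>v (dim_row A)" and y: "y \<in> carrier_vec n"
  shows "stack_rows n As *\<^sub>v y = 0\<^sub>v (sum_list (map dim_row As))"
  using assms(1)
proof (induction As)
  case Nil
  show ?case unfolding stack_rows_def mult_mat_vec_def by (rule eq_vecI) auto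
next
  case (Cons A As)
  then have "stack_rows n (A#As) *\<^sub>v y = 0\<^sub>v (dim_row A) @\<^sub>v 0\<^sub>v (sum_list (map dim_row As))"
    using stack_mult[of A As n y] y by simp
  also have "\<dots> = 0\<^sub>v (sum_list (map dim_row (A#As)))" by (intro eq_vecI) auto
  finally show ?case .
qed



lemma ker_rank:
  fixes Om :: "real mat"
  assumes Om: "Om \<in> carrier_mat nr n" and rk: "vec_space.rank nr Om = n - 1" and n: "n \<ge> 1"
    and one: "Om *\<^sub>v ones_vec n = 0\<^sub>v nr"
    and y: "y \<in> carrier_vec n" "Om *\<^sub>v y = 0\<^sub>v nr"
  shows "\<exists>c. y = c \<cdot>\<^sub>v ones_vec n"
proof -
  interpret VN: vec_space "TYPE(real)" n .
  interpret VR: vec_space "TYPE(real)" nr .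
  have lm: "linear_map class_ring (module_vec TYPE(real) n) (module_vec TYPE(real) nr) (\<lambda>v. Om *\<^sub>v v)"
    unfolding linear_map_def
  proof (intro conjI)
    show "vectorspace class_ring (module_vec TYPE(real) n)" by (rule VN.vectorspace_axioms)
    show "vectorspace class_ring (module_vec TYPE(real) nr)" by (rule VR.vectorspace_axioms)
    show "mod_hom class_ring (module_vec TYPE(real) n) (module_vec TYPE(real) nr) (\<lambda>v. Om *\<^sub>v v)"
      apply (rule mod_hom.intro)
        apply (rule VN.module_axioms)
       apply (rule VR.module_axioms)
      unfolding mod_hom_axioms_def LinearCombinations.module_hom_def
      using Om by (auto simp: module_vec_simps mult_add_distrib_mat_vec mult_mat_vec)
  qed
  interpret L: linear_map class_ring "module_vec TYPE(real) n" "module_vec TYPE(real) nr" "\<lambda>v. Om *\<^sub>v v"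
    by (rule lm)
  have rn: "vectorspace.dim class_ring ((module_vec TYPE(real) nr)\<lparr>carrier := L.imT\<rparr>) + vectorspace.dim class_ring ((module_vec TYPE(real) n)\<lparr>carrier := L.kerT\<rparr>) = n"
    using L.rank_nullity_main(1)[OF VN.fin_dim] VN.dim_is_n by simp
  have ker: "L.kerT = mat_kernel Om"
    unfolding L.ker_def mat_kernel_def using Om by (auto simp: module_vec_simps)
  have im: "L.imT = VR.span (set (cols Om))"
  proof -
    have "VR.span (set (cols Om)) = VR.span_list (cols Om)"
      by (rule VR.span_list_as_span[symmetric], use Om cols_dim in blast)
    also have "\<dots> = {Om *\<^sub>v vec n c | c. True}"
    proof -
      have e: "VR.lincomb_list c (cols Om) = Om *\<^sub>v vec n c" for c
      proof -
        have "VR.lincomb_list c (cols Om) = mat_of_cols nr (cols Om) *\<^sub>v vec (length (cols Om)) c"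
          by (rule VR.lincomb_list_as_mat_mult) (use Om in \<open>auto simp: cols_def\<close>)
        also have "mat_of_cols nr (cols Om) = Om" using Om mat_of_cols_cols[of Om] by simp
        finally show ?thesis using Om by simp
      qed
      show ?thesis unfolding VR.span_list_def e by (auto simp: class_ring_simps)
    qed
    also have "\<dots> = L.imT"
    proof -
      have xe: "x = vec n (\<lambda>i. x $ i)" if "x \<in> carrier_vec n" for x :: "real vec"
        using that by (intro eq_vecI) auto
      have "\<exists>c. Om *\<^sub>v x = Om *\<^sub>v vec n c" if "x \<in> carrier_vec n" for x
        using xe[OF that] by metis
      moreover have "Om *\<^sub>v vec n c \<in> (\<lambda>v. Om *\<^sub>v v) ` carrier_vec n" for c
        by auto
      ultimately show ?thesis
        unfolding L.im_def by (auto simp: module_vec_simps)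

    qed
    finally show ?thesis by simp
  qed
  have "vectorspace.dim class_ring ((module_vec TYPE(real) nr)\<lparr>carrier := L.imT\<rparr>) = n - 1"
    using rk unfolding VR.rank_def im by simp
  with rn n have dk: "vectorspace.dim class_ring ((module_vec TYPE(real) n)\<lparr>carrier := L.kerT\<rparr>) = 1" by simp
  interpret K: kernel nr n Om by (unfold_locales, rule Om)
  obtain B where B: "finite B" "K.basis B" using kernel_basis_exists[OF Om] by blast
  have "K.dim = 1" using dk unfolding ker by simp
  hence "card B = 1" using K.Ker.dim_basis[OF B] by simp
  then obtain b where Bb: "B = {b}" by (meson card_1_singletonE)
  have gen: "K.span {b} = mat_kernel Om" and bk: "b \<in> mat_kernel Om"
    using B(2) Bb unfolding K.Ker.basis_def by auto
  have sp: "\<exists>c. v = c \<cdot>\<^sub>v b" if "v \<in> mat_kernel Om" for v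
  proof -
    from K.Ker.finite_in_span[of "{b}" v] gen that bk
    obtain a where "K.lincomb a {b} = v" by auto
    thus ?thesis unfolding K.Ker.lincomb_def using bk by auto
  qed
  have k1: "ones_vec n \<in> mat_kernel Om" using one Om by (auto intro!: mat_kernelI simp: ones_vec_def)
  have ky: "y \<in> mat_kernel Om" using y Om by (auto intro!: mat_kernelI)
  obtain d where d: "ones_vec n = d \<cdot>\<^sub>v b" using sp[OF k1] by blast
  obtain c where c: "y = c \<cdot>\<^sub>v b" using sp[OF ky] by blast
  have "d \<noteq> 0"
  proof
    assume "d = 0"
    then have "ones_vec n $ 0 = 0" using d n bk Om by (auto simp: mat_kernel_def)
    thus False using n by (simp add: ones_vec_def)
  qed
  have "y = (c / d) \<cdot>\<^sub>v ones_vec n"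
    unfolding c d using \<open>d \<noteq> 0\<close> by (simp add: smult_smult_assoc)
  thus ?thesis by blast
qed


lemma self_sp_nonneg: "(v :: real vec) \<bullet> v \<ge> 0"
  unfolding scalar_prod_def by (intro sum_nonneg) simp

lemma self_sp_zero:
  assumes v: "(v :: real vec) \<in> carrier_vec k" and z: "v \<bullet> v = 0"
  shows "v = 0\<^sub>v k"
proof (rule eq_vecI)
  fix i assume "i < dim_vec (0\<^sub>v k :: real vec)"
  hence i: "i < k" by simp
  have "\<forall>j\<in>{0..<dim_vec v}. v $ j * v $ j = 0"
    using z unfolding scalar_prod_def by (subst sum_nonneg_eq_0_iff[symmetric]) auto
  then show "v $ i = 0\<^sub>v k $ i" using i v by auto
qed (use v in simp)

lemma smult_mat_mult_vec:
  assumes "B \<in> carrier_mat nr nc" "x \<in> carrier_vec nc"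
  shows "(k \<cdot>\<^sub>m B) *\<^sub>v x = k \<cdot>\<^sub>v (B *\<^sub>v (x :: real vec))"
  using assms by (intro eq_vecI) (auto simp: scalar_prod_def sum_distrib_left ac_simps)

lemma conn:
  assumes G: "graph_connected T Es" and e: "\<forall>(a,b)\<in>set Es. g a = g b" and u: "u < T" and v: "v < T"
  shows "g u = g v"
proof -
  have "(u,v) \<in> (undirected_adj Es)\<^sup>*" using G u v unfolding graph_connected_def by blast
  then show ?thesis
  proof (induction rule: rtrancl_induct)
    case base then show ?case by simp
  next
    case (step y z)
    from step(2) have "g y = g z" using e unfolding undirected_adj_def by auto
    with step(3) show ?case by simp
  qed
qed

lemma sum_blocks: "(\<Sum>i\<in>{0..<T*n::nat}. f i) = (\<Sum>s<T. \<Sum>k<n. f (s*n+k))"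
proof -
  have "(\<Sum>i\<in>{0..<T*n}. f i) = (\<Sum>i<T*n. f i)" by (simp only: atLeast0LessThan)
  also have "\<dots> = (\<Sum>s<T. sum f {s*n..<s*n+n})" by (rule sum.nat_group[symmetric])
  also have "\<dots> = (\<Sum>s<T. \<Sum>k<n. f (s*n+k))"
  proof (rule sum.cong[OF refl])
    fix s
    have "sum f {s*n..<s*n+n} = sum f {0+s*n..<n+s*n}" by (simp add: add.commute)
    also have "\<dots> = (\<Sum>k\<in>{0..<n}. f (k+s*n))" by (rule sum.shift_bounds_nat_ivl)
    finally show "sum f {s*n..<s*n+n} = (\<Sum>k<n. f (s*n+k))" by (simp add: atLeast0LessThan add.commute)
  qed
  finally show ?thesis .
qed


lemma mat_mult_zero_vec: "B \<in> carrier_mat r c \<Longrightarrow> B *\<^sub>v 0\<^sub>v c = (0\<^sub>v r :: real vec)"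
  by (intro eq_vecI) auto

lemma smult_zero_v[simp]: "k \<cdot>\<^sub>v 0\<^sub>v m = (0\<^sub>v m :: real vec)"
  by (intro eq_vecI) auto

lemma blk_lt: "a < T \<Longrightarrow> k < n \<Longrightarrow> a * n + k < T * (n::nat)"
proof -
  assume a: "a < T" and k: "k < n"
  have "a*n+k < (a+1)*n" using k by simp
  also have "\<dots> \<le> T*n" using a by (intro mult_le_mono1) simp
  finally show ?thesis .
qed

theorem proposition3:
  fixes n T :: nat and Es :: "(nat \<times> nat) list" and Et :: "nat \<Rightarrow> (nat \<times> nat) list"
    and \<mu> :: real
  assumes "n \<ge> 2" and "T \<ge> 2"
    and "oriented_simple_graph T Es" and "graph_connected T Es"
    and "\<forall>t<T. oriented_simple_graph n (Et t)"
    and "\<mu> > 0"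
    and "vec_space.rank (dim_row (stack_rows n (map (\<lambda>t. incidence_mat n (Et t)) [0..<T])))
           (stack_rows n (map (\<lambda>t. incidence_mat n (Et t)) [0..<T])) = n - 1"
  shows "let D = incidence_mat T Es; M = kron D (1\<^sub>m n);
             C = diag_block_mat (map (\<lambda>t. incidence_mat n (Et t)) [0..<T]);
             A = \<mu> \<cdot>\<^sub>m (transpose_mat M * M) + transpose_mat C * C;
             P = kron (1\<^sub>m T) (1\<^sub>m n - (1 / real n) \<cdot>\<^sub>m ones_mat n)
         in mat_kernel A = span_one (ones_vec (n * T)) \<and> col_space P \<subseteq> col_space A"
proof -
  define D where "D = incidence_mat T Es"
  define M where "M = kron D (1\<^sub>m n)"
  define Cs where "Cs = map (\<lambda>t. incidence_mat n (Et t)) [0..<T]"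
  define C where "C = diag_block_mat Cs"
  define A where "A = \<mu> \<cdot>\<^sub>m (transpose_mat M * M) + transpose_mat C * C"
  define P where "P = kron (1\<^sub>m T) (1\<^sub>m n - (1 / real n) \<cdot>\<^sub>m ones_mat n)"
  define Om where "Om = stack_rows n Cs"
  define N where "N = T * n"
  define nr where "nr = sum_list (map dim_row Cs)"
  define mE where "mE = length Es * n"
  define one where "one = ones_vec N"
  have nT: "n * T = N" unfolding N_def by simp
  have n0: "n > 0" using assms(1) by simp
  have N0: "N > 0" using assms(1,2) unfolding N_def by simp
  have one: "one \<in> carrier_vec N" unfolding one_def ones_vec_def by simp
  have Cs_col: "\<forall>B\<in>set Cs. dim_col B = n" unfolding Cs_def by (auto simp: incidence_mat_def)
  have Cs_one: "\<forall>B\<in>set Cs. dim_col B = n \<and> B *\<^sub>v ones_vec n = 0\<^sub>v (dim_row B)"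
  proof
    fix B assume "B \<in> set Cs"
    then obtain t where t: "t < T" and B: "B = incidence_mat n (Et t)" unfolding Cs_def by auto
    have "B *\<^sub>v ones_vec n = 0\<^sub>v (length (Et t))" unfolding B by (rule inc_ones) (use assms(5) t in auto)
    moreover have "dim_row B = length (Et t)" "dim_col B = n" unfolding B incidence_mat_def by auto
    ultimately show "dim_col B = n \<and> B *\<^sub>v ones_vec n = 0\<^sub>v (dim_row B)" by simp
  qed
  have Om: "Om \<in> carrier_mat nr n" unfolding Om_def nr_def by (rule stack_carrier[OF Cs_col])
  have Om1: "Om *\<^sub>v ones_vec n = 0\<^sub>v nr" unfolding Om_def nr_def
    by (rule stack_zero[OF Cs_one]) (simp add: ones_vec_def)
  have "vec_space.rank (dim_row Om) Om = n - 1" using assms(7) unfolding Om_def Cs_def .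
  hence rk: "vec_space.rank nr Om = n - 1" using carrier_matD(1)[OF Om] by simp
  have M: "M \<in> carrier_mat mE N"
    unfolding M_def D_def mE_def N_def kron_def by (simp add: incidence_mat_def)
  have lenCs: "length Cs = T" unfolding Cs_def by simp
  have C: "C \<in> carrier_mat nr N"
    apply (rule carrier_matI)
     apply (simp add: C_def nr_def dim_diag_block_mat(1))
    apply (simp only: C_def dim_diag_block_mat(2) sum_list_const_n[OF Cs_col] lenCs N_def)
    done
  have A: "A \<in> carrier_mat N N" unfolding A_def using M C by auto
  have Ax: "A *\<^sub>v x = \<mu> \<cdot>\<^sub>v (transpose_mat M *\<^sub>v (M *\<^sub>v x)) + transpose_mat C *\<^sub>v (C *\<^sub>v x)"
    if x: "x \<in> carrier_vec N" for x
  proof -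
    have MM: "transpose_mat M * M \<in> carrier_mat N N" using M by auto
    have CC: "transpose_mat C * C \<in> carrier_mat N N" using C by auto
    have "A *\<^sub>v x = (\<mu> \<cdot>\<^sub>m (transpose_mat M * M)) *\<^sub>v x + (transpose_mat C * C) *\<^sub>v x"
      unfolding A_def by (rule add_mult_distrib_mat_vec) (use MM CC x in auto)
    also have "(\<mu> \<cdot>\<^sub>m (transpose_mat M * M)) *\<^sub>v x = \<mu> \<cdot>\<^sub>v ((transpose_mat M * M) *\<^sub>v x)"
      by (rule smult_mat_mult_vec[OF MM x])
    also have "(transpose_mat M * M) *\<^sub>v x = transpose_mat M *\<^sub>v (M *\<^sub>v x)"
      using M x by (simp add: assoc_mult_mat_vec)
    also have "(transpose_mat C * C) *\<^sub>v x = transpose_mat C *\<^sub>v (C *\<^sub>v x)"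
      using C x by (simp add: assoc_mult_mat_vec)
    finally show ?thesis .
  qed
  have ones_rep: "one = vec N (\<lambda>i. ones_vec n $ (i mod n))"
    unfolding one_def by (intro eq_vecI) (auto simp: ones_vec_def n0)
  have Crep: "C *\<^sub>v vec N (\<lambda>i. y $ (i mod n)) = Om *\<^sub>v y" if y: "y \<in> carrier_vec n" for y
    using diag_rep[OF Cs_col y] unfolding C_def Om_def lenCs N_def .
  have C1: "C *\<^sub>v one = 0\<^sub>v nr"
  proof -
    have "C *\<^sub>v one = Om *\<^sub>v ones_vec n" unfolding ones_rep by (rule Crep) (simp add: ones_vec_def)
    then show ?thesis using Om1 by simp
  qed
  have M1: "M *\<^sub>v one = 0\<^sub>v mE"
  proof (rule eq_vecI)
    fix i assume "i < dim_vec (0\<^sub>v mE :: real vec)"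
    hence i: "i < length Es * n" unfolding mE_def by simp
    have e: "i div n < length Es" using i n0 by (simp add: less_mult_imp_div_less)
    hence "Es ! (i div n) \<in> set Es" by simp
    hence ab: "fst (Es ! (i div n)) < T" "snd (Es ! (i div n)) < T"
      using assms(3) unfolding oriented_simple_graph_def by auto
    have "(M *\<^sub>v one) $ i = one $ (fst (Es ! (i div n)) * n + i mod n) - one $ (snd (Es ! (i div n)) * n + i mod n)"
      unfolding M_def D_def by (rule kron_row[OF assms(3) n0 _ i]) (use one N_def in simp)
    also have "\<dots> = 0" using blk_lt[OF ab(1), of "i mod n" n] blk_lt[OF ab(2), of "i mod n" n] n0
      unfolding one_def ones_vec_def N_def by simp
    finally show "(M *\<^sub>v one) $ i = 0\<^sub>v mE $ i" using i mE_def by simp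
  qed (use M in simp)
  have A1: "A *\<^sub>v one = 0\<^sub>v N"
  proof -
    have "transpose_mat M *\<^sub>v 0\<^sub>v mE = 0\<^sub>v N" "transpose_mat C *\<^sub>v 0\<^sub>v nr = 0\<^sub>v N"
      using M C by (auto intro: mat_mult_zero_vec)
    then show ?thesis unfolding Ax[OF one] M1 C1 by simp
  qed
  have ones_T: "one \<bullet> (transpose_mat B *\<^sub>v w) = 0"
    if B: "B \<in> carrier_mat r N" and w: "w \<in> carrier_vec r" and B1: "B *\<^sub>v one = 0\<^sub>v r" for B w r
  proof -
    have "one \<bullet> (transpose_mat B *\<^sub>v w) = (transpose_mat B *\<^sub>v w) \<bullet> one"
      by (rule comm_scalar_prod[OF one]) (use B w in auto)
    also have "\<dots> = w \<bullet> (B *\<^sub>v one)" by (rule transpose_vec_mult_scalar[OF B one w])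
    also have "\<dots> = 0" unfolding B1 using w by simp
    finally show ?thesis .
  qed
  have ones_Ax: "one \<bullet> (A *\<^sub>v x) = 0" if x: "x \<in> carrier_vec N" for x
  proof -
    have c1: "transpose_mat M *\<^sub>v (M *\<^sub>v x) \<in> carrier_vec N" using M x by auto
    have c2: "transpose_mat C *\<^sub>v (C *\<^sub>v x) \<in> carrier_vec N" using C x by auto
    have "one \<bullet> (A *\<^sub>v x) = \<mu> * (one \<bullet> (transpose_mat M *\<^sub>v (M *\<^sub>v x))) + one \<bullet> (transpose_mat C *\<^sub>v (C *\<^sub>v x))"
      unfolding Ax[OF x] using c1 c2 one by (simp add: scalar_prod_add_distrib[of _ N])
    also have "\<dots> = 0"
      using ones_T[OF M _ M1, of "M *\<^sub>v x"] ones_T[OF C _ C1, of "C *\<^sub>v x"] M C x by simp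
    finally show ?thesis .
  qed
  have quad: "x \<bullet> (A *\<^sub>v x) = \<mu> * ((M *\<^sub>v x) \<bullet> (M *\<^sub>v x)) + (C *\<^sub>v x) \<bullet> (C *\<^sub>v x)"
    if x: "x \<in> carrier_vec N" for x
  proof -
    have c1: "transpose_mat M *\<^sub>v (M *\<^sub>v x) \<in> carrier_vec N" using M x by auto
    have c2: "transpose_mat C *\<^sub>v (C *\<^sub>v x) \<in> carrier_vec N" using C x by auto
    have t: "x \<bullet> (transpose_mat B *\<^sub>v (B *\<^sub>v x)) = (B *\<^sub>v x) \<bullet> (B *\<^sub>v x)"
      if B: "B \<in> carrier_mat r N" for B r
    proof -
      have "x \<bullet> (transpose_mat B *\<^sub>v (B *\<^sub>v x)) = (transpose_mat B *\<^sub>v (B *\<^sub>v x)) \<bullet> x"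
        by (rule comm_scalar_prod[OF x]) (use B x in auto)
      also have "\<dots> = (B *\<^sub>v x) \<bullet> (B *\<^sub>v x)" by (rule transpose_vec_mult_scalar[OF B x]) (use B x in auto)
      finally show ?thesis .
    qed
    show ?thesis
      unfolding Ax[OF x] using c1 c2 x t[OF M] t[OF C] by (simp add: scalar_prod_add_distrib[of _ N])
  qed
  have ker: "mat_kernel A = span_one one"
  proof
    show "mat_kernel A \<subseteq> span_one one"
    proof
      fix x assume xk: "x \<in> mat_kernel A"
      have x: "x \<in> carrier_vec N" and Ax0: "A *\<^sub>v x = 0\<^sub>v N" using mat_kernelD[OF A xk] by auto
      have sum0: "\<mu> * ((M *\<^sub>v x) \<bullet> (M *\<^sub>v x)) + (C *\<^sub>v x) \<bullet> (C *\<^sub>v x) = 0"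
        using quad[OF x] Ax0 x by simp
      have p1: "(M *\<^sub>v x) \<bullet> (M *\<^sub>v x) \<ge> 0" "(C *\<^sub>v x) \<bullet> (C *\<^sub>v x) \<ge> 0" by (rule self_sp_nonneg)+
      have p2: "\<mu> * ((M *\<^sub>v x) \<bullet> (M *\<^sub>v x)) \<ge> 0" using p1 assms(6) by simp
      have z2: "(C *\<^sub>v x) \<bullet> (C *\<^sub>v x) = 0" using sum0 p1 p2 by linarith
      have "\<mu> * ((M *\<^sub>v x) \<bullet> (M *\<^sub>v x)) = 0" using sum0 p1 p2 by linarith
      hence z1: "(M *\<^sub>v x) \<bullet> (M *\<^sub>v x) = 0" using assms(6) by simp
      have Mx0: "M *\<^sub>v x = 0\<^sub>v mE" by (rule self_sp_zero[OF _ z1]) (use M x in auto)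
      have Cx0: "C *\<^sub>v x = 0\<^sub>v nr" by (rule self_sp_zero[OF _ z2]) (use C x in auto)
      have edge: "\<forall>(a,b)\<in>set Es. x $ (a*n+k) = x $ (b*n+k)" if k: "k < n" for k
      proof
        fix ab assume "ab \<in> set Es"
        then obtain e where e: "e < length Es" "Es ! e = ab" by (auto simp: in_set_conv_nth)
        define i where "i = e * n + k"
        have i: "i < length Es * n" unfolding i_def using blk_lt[OF e(1) k] .
        have idiv: "i div n = e" "i mod n = k" unfolding i_def using k by auto
        have "(M *\<^sub>v x) $ i = x $ (fst (Es ! (i div n)) * n + i mod n) - x $ (snd (Es ! (i div n)) * n + i mod n)"
          unfolding M_def D_def by (rule kron_row[OF assms(3) n0 _ i]) (use x N_def in simp)
        moreover have "(M *\<^sub>v x) $ i = 0" unfolding Mx0 using i mE_def by simp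
        ultimately show "case ab of (a, b) \<Rightarrow> x $ (a * n + k) = x $ (b * n + k)"
          unfolding idiv e(2) by (cases ab) simp
      qed
      have blocks: "x $ i = x $ (i mod n)" if i: "i < N" for i
      proof -
        have s: "i div n < T" using i n0 unfolding N_def by (simp add: less_mult_imp_div_less)
        have k: "i mod n < n" using n0 by simp
        have "(\<lambda>s. x $ (s*n + i mod n)) (i div n) = (\<lambda>s. x $ (s*n + i mod n)) 0"
          by (rule conn[OF assms(4)]) (use edge[OF k] s assms(2) in auto)
        thus ?thesis by simp
      qed
      define y where "y = vec n (\<lambda>k. x $ k)"
      have y: "y \<in> carrier_vec n" unfolding y_def by simp
      have xr: "x = vec N (\<lambda>i. y $ (i mod n))"
        by (rule eq_vecI) (use x blocks n0 in \<open>auto simp: y_def\<close>)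
      have "Om *\<^sub>v y = 0\<^sub>v nr" using Crep[OF y] xr Cx0 by simp
      then obtain c where c: "y = c \<cdot>\<^sub>v ones_vec n"
        using ker_rank[OF Om rk _ Om1 y] n0 by auto
      have "x = c \<cdot>\<^sub>v one"
        by (rule eq_vecI) (use x xr c n0 in \<open>auto simp: one_def ones_vec_def\<close>)
      then show "x \<in> span_one one" unfolding span_one_def by blast
    qed
    show "span_one one \<subseteq> mat_kernel A"
    proof
      fix v assume "v \<in> span_one one"
      then obtain c where v: "v = c \<cdot>\<^sub>v one" unfolding span_one_def by blast
      have "A *\<^sub>v v = c \<cdot>\<^sub>v (A *\<^sub>v one)" unfolding v by (rule mult_mat_vec[OF A one])
      also have "\<dots> = 0\<^sub>v N" unfolding A1 by simp
      finally show "v \<in> mat_kernel A" by (intro mat_kernelI[OF A]) (use v one in auto)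
    qed
  qed
  define J where "J = ones_mat N"
  have J: "J \<in> carrier_mat N N" unfolding J_def ones_mat_def by simp
  have Jx: "J *\<^sub>v x = (one \<bullet> x) \<cdot>\<^sub>v one" if x: "x \<in> carrier_vec N" for x
    by (rule eq_vecI) (use x in \<open>auto simp: J_def ones_mat_def one_def ones_vec_def scalar_prod_def\<close>)
  have oo: "one \<bullet> one = real N"
    unfolding one_def ones_vec_def scalar_prod_def by simp
  have oJ: "one \<bullet> (J *\<^sub>v x) = real N * (one \<bullet> x)" if x: "x \<in> carrier_vec N" for x
    unfolding Jx[OF x] using one oo by simp
  define A' where "A' = A + J"
  have A': "A' \<in> carrier_mat N N" unfolding A'_def using A J by simp
  have A'x: "A' *\<^sub>v x = A *\<^sub>v x + J *\<^sub>v x" if x: "x \<in> carrier_vec N" for x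
    unfolding A'_def by (rule add_mult_distrib_mat_vec[OF A J x])
  have oA'x: "one \<bullet> (A' *\<^sub>v x) = real N * (one \<bullet> x)" if x: "x \<in> carrier_vec N" for x
  proof -
    have "one \<bullet> (A' *\<^sub>v x) = one \<bullet> (A *\<^sub>v x) + one \<bullet> (J *\<^sub>v x)"
      unfolding A'x[OF x] by (rule scalar_prod_add_distrib[OF one]) (use A J x in auto)
    then show ?thesis using ones_Ax[OF x] oJ[OF x] by simp
  qed
  have inj: "x = 0\<^sub>v N" if x: "x \<in> carrier_vec N" and z: "A' *\<^sub>v x = 0\<^sub>v N" for x
  proof -
    have "real N * (one \<bullet> x) = 0" using oA'x[OF x] z one by simp
    hence ox: "one \<bullet> x = 0" using N0 by simp
    have "J *\<^sub>v x = 0\<^sub>v N" unfolding Jx[OF x] ox by (intro eq_vecI) (use one in auto)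
    hence "A *\<^sub>v x = 0\<^sub>v N" using A'x[OF x] z A x by simp
    hence "x \<in> mat_kernel A" by (intro mat_kernelI[OF A x])
    hence "x \<in> span_one one" using ker by simp
    then obtain c where c: "x = c \<cdot>\<^sub>v one" unfolding span_one_def by blast
    have "c * real N = 0" using ox oo one unfolding c by simp
    hence "c = 0" using N0 by simp
    then show ?thesis unfolding c by (intro eq_vecI) (use one in auto)
  qed
  have det: "det A' \<noteq> 0"
    using det_0_iff_vec_prod_zero[OF A'] inj by blast
  from det_non_zero_imp_unit[OF A' det, unfolded Units_def, of "()"]
  obtain B where B: "B \<in> carrier_mat N N" and AB: "A' * B = 1\<^sub>m N"
    by (auto simp: ring_mat_def)
  have surj: "v \<in> col_space A" if v: "v \<in> carrier_vec N" and ov: "one \<bullet> v = 0" for v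
  proof -
    define x where "x = B *\<^sub>v v"
    have x: "x \<in> carrier_vec N" unfolding x_def using B v by simp
    have "A' *\<^sub>v x = (A' * B) *\<^sub>v v" unfolding x_def using A' B v by (simp add: assoc_mult_mat_vec)
    also have "\<dots> = v" unfolding AB using v by simp
    finally have A'xv: "A' *\<^sub>v x = v" .
    have "real N * (one \<bullet> x) = 0" using oA'x[OF x] A'xv ov by simp
    hence ox: "one \<bullet> x = 0" using N0 by simp
    have "J *\<^sub>v x = 0\<^sub>v N" unfolding Jx[OF x] ox by (intro eq_vecI) (use one in auto)
    hence "A *\<^sub>v x = v" using A'x[OF x] A'xv A x by simp
    moreover have "dim_col A = N" using A by simp
    ultimately show ?thesis unfolding col_space_def using x by blast
  qed
  have P: "P \<in> carrier_mat N N" unfolding P_def kron_def N_def ones_mat_def by simp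
  have colsum: "(\<Sum>i\<in>{0..<N}. P $$ (i, j)) = 0" if j: "j < N" for j
  proof -
    have jd: "j div n < T" using j n0 unfolding N_def by (simp add: less_mult_imp_div_less)
    have jm: "j mod n < n" using n0 by simp
    have "(\<Sum>i\<in>{0..<N}. P $$ (i, j)) = (\<Sum>s<T. \<Sum>k<n. P $$ (s*n+k, j))"
      unfolding N_def by (rule sum_blocks)
    also have "\<dots> = (\<Sum>s<T. \<Sum>k<n. (if s = j div n then 1 else 0) * ((if k = j mod n then 1 else 0) - 1 / real n))"
    proof (intro sum.cong refl)
      fix s k assume s: "s \<in> {..<T}" and k: "k \<in> {..<n}"
      have sk: "s*n+k < T*n" using blk_lt[of s T k n] s k by simp
      have "(s*n+k) div n = s" "(s*n+k) mod n = k" using k by auto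
      then show "P $$ (s*n+k, j) = (if s = j div n then 1 else 0) * ((if k = j mod n then 1 else 0) - 1 / real n)"
        unfolding P_def kron_def using sk j s k jd jm unfolding N_def by (simp add: ones_mat_def)
    qed
    also have "\<dots> = (\<Sum>s<T. if s = j div n then (\<Sum>k<n. (if k = j mod n then 1 else 0) - 1 / real n) else 0)"
      by (intro sum.cong refl) simp
    also have "\<dots> = (\<Sum>k<n. (if k = j mod n then 1 else 0) - 1 / real n)"
      using jd by simp
    also have "\<dots> = 1 - real n * (1 / real n)"
      using jm by (simp add: sum_subtractf)
    also have "\<dots> = 0" using n0 by simp
    finally show ?thesis .
  qed
  have PT1: "transpose_mat P *\<^sub>v one = 0\<^sub>v N"
  proof (rule eq_vecI)
    fix j assume "j < dim_vec (0\<^sub>v N :: real vec)"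
    hence j: "j < N" by simp
    have "(transpose_mat P *\<^sub>v one) $ j = (\<Sum>i\<in>{0..<N}. P $$ (i, j))"
      using P j unfolding one_def ones_vec_def by (simp add: scalar_prod_def)
    then show "(transpose_mat P *\<^sub>v one) $ j = 0\<^sub>v N $ j" using colsum[OF j] j by simp
  qed (use P in simp)
  have col: "col_space P \<subseteq> col_space A"
  proof
    fix w assume "w \<in> col_space P"
    then obtain z where z: "z \<in> carrier_vec N" and w: "w = P *\<^sub>v z"
      unfolding col_space_def using P by auto
    have "one \<bullet> w = (transpose_mat P *\<^sub>v one) \<bullet> z"
      unfolding w by (rule transpose_vec_mult_scalar[OF P z one, symmetric])
    also have "\<dots> = 0" unfolding PT1 using z by simp
    finally have "one \<bullet> w = 0" .
    moreover have "w \<in> carrier_vec N" unfolding w using P z by simp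
    ultimately show "w \<in> col_space A" using surj by blast
  qed
  show ?thesis
    unfolding Let_def D_def[symmetric] M_def[symmetric] Cs_def[symmetric] C_def[symmetric]
      A_def[symmetric] P_def[symmetric] nT one_def[symmetric]
    using ker col by simp
qed

end
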